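(* Let $s\ge0$, $p\in[1,+\infty)$ and $f\in B^{s,\infty}_p(\mathbb R^d)$. Then $$\dim_{\mathcal H}\big(\{x\in\mathbb R^d:\ (P_jf(x))_{j}\text{ diverges}\}\big)\le d-sp$$ (in particular this set is empty when $d-sp<0$). The wavelets are not assumed to be compactly supported.
   Context: Standing setup. $(V_j)_{j\in\mathbb Z}$ is an orthogonal multiresolution analysis of $L^2(\mathbb R^d)$ with scaling function $\varphi$ (the integer translates of $\varphi$ form an orthonormal basis of $V_0$), and $\psi^{(1)},\dots,\psi^{(2^d-1)}$ are associated wavelets: the functions $2^{dj/2}\psi^{(i)}(2^j\cdot-k)$ form an orthonormal basis of $L^2(\mathbb R^d)$. The functions $\varphi,\psi^{(i)}$ are smooth (at least $\lfloor s\rfloor+1$ continuous derivatives), and they and these derivatives have fast decay: for every $N\ge0$ there is $C_N$ with $|\psi^{(i)}(x)|\le C_N(1+\|x\|)^{-N}$. $\|\cdot\|$ is the supremum norm. For $j\ge0$, $k\in\mathbb Z^d$, the dyadic cube $\lambda=(j,k)$ is $\prod_{m=1}^d[k_m2^{-j},(k_m+1)2^{-j})$; $\Lambda_j$ is the set of such cubes; $\psi^{(i)}_\lambda(x)=\psi^{(i)}(2^jx-k)$. For $f$ set $C_k=\int\overline{\varphi(x-k)}f$, $c^{(i)}_\lambda=2^{dj}\int\overline{\psi^{(i)}_\lambda}f$, $Q_lf(x)=\sum_i\sum_{\lambda\in\Lambda_l}c^{(i)}_\lambda\psi^{(i)}_\lambda(x)$, $P_jf(x)=\sum_kC_k\varphi(x-k)+\sum_{0\le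 l<j}Q_lf(x)$. $B^{s,\infty}_p(\mathbb R^d)$ is the set of $f$ with $(C_k)\in\ell^p$ and $\sup_{j\ge0}2^{(s-d/p)j}(\sum_i\sum_{\lambda\in\Lambda_j}|c^{(i)}_\lambda|^p)^{1/p}<\infty$. $\dim_{\mathcal H}$ is Hausdorff dimension. *)

theory Defs
  imports "HOL-Analysis.Analysis"
begin

type_synonym 'd fn = "real ^ 'd \<Rightarrow> complex"

definition L2 :: "'d::finite fn \<Rightarrow> bool" where
  "L2 f \<longleftrightarrow> f \<in> borel_measurable lborel \<and> integrable lborel (\<lambda>x. (cmod (f x))\<^sup>2)"

definition l2inner :: "'d::finite fn \<Rightarrow> 'd fn \<Rightarrow> complex" where
  "l2inner f g = (LINT x|lborel. f x * cnj (g x))"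

definition ae_zero :: "'d::finite fn \<Rightarrow> bool" where
  "ae_zero f \<longleftrightarrow> (AE x in lborel. f x = 0)"

text \<open>Closed linear span in L^2 of a family, as the double orthogonal complement.\<close>
definition cspan :: "'d::finite fn set \<Rightarrow> 'd fn set" where
  "cspan A = {g. L2 g \<and> (\<forall>h. L2 h \<and> (\<forall>a\<in>A. l2inner h a = 0) \<longrightarrow> l2inner g h = 0)}"

definition orthonormal_on :: "'i set \<Rightarrow> ('i \<Rightarrow> 'd::finite fn) \<Rightarrow> bool" where
  "orthonormal_on I e \<longleftrightarrow>
     (\<forall>i\<in>I. L2 (e i) \<and> l2inner (e i) (e i) = 1) \<and>
     (\<forall>i\<in>I. \<forall>i'\<in>I. i \<noteq> i' \<longrightarrow> l2inner (e i) (e i') = 0)"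

definition onb_on :: "'i set \<Rightarrow> ('i \<Rightarrow> 'd::finite fn) \<Rightarrow> bool" where
  "onb_on I e \<longleftrightarrow> orthonormal_on I e \<and>
     (\<forall>h. L2 h \<and> (\<forall>i\<in>I. l2inner h (e i) = 0) \<longrightarrow> ae_zero h)"

definition ivec :: "int ^ 'd \<Rightarrow> real ^ 'd" where
  "ivec k = (\<chi> m. real_of_int (k $ m))"

definition dil :: "int \<Rightarrow> int ^ 'd \<Rightarrow> 'd::finite fn \<Rightarrow> 'd fn" where
  "dil j k g = (\<lambda>x. complex_of_real (2 powr (real CARD('d) * real_of_int j / 2)) *
                    g ((2 powr real_of_int j) *\<^sub>R x - ivec k))"

definition Vspace :: "'d::finite fn \<Rightarrow> int \<Rightarrow> 'd fn set" where
  "Vspace \<phi> j = cspan (range (\<lambda>k. dil j k \<phi>))"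

definition orth_MRA :: "'d::finite fn \<Rightarrow> bool" where
  "orth_MRA \<phi> \<longleftrightarrow>
     orthonormal_on UNIV (\<lambda>k. dil 0 k \<phi>) \<and>
     (\<forall>j. Vspace \<phi> j \<subseteq> Vspace \<phi> (j + 1)) \<and>
     (\<forall>g. (\<forall>j. g \<in> Vspace \<phi> j) \<longrightarrow> ae_zero g) \<and>
     (\<forall>h. L2 h \<and> (\<forall>j. \<forall>g\<in>Vspace \<phi> j. l2inner h g = 0) \<longrightarrow> ae_zero h)"

definition associated_wavelets :: "'d::finite fn \<Rightarrow> (nat \<Rightarrow> 'd fn) \<Rightarrow> bool" where
  "associated_wavelets \<phi> \<psi> \<longleftrightarrow>
     (\<forall>i\<in>{1..2^CARD('d) - 1}. \<psi> i \<in> Vspace \<phi> 1 \<and> (\<forall>g\<in>Vspace \<phi> 0. l2inner (\<psi> i) g = 0)) \<and>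
     onb_on ({1..2^CARD('d) - 1} \<times> UNIV \<times> UNIV) (\<lambda>(i, j, k). dil j k (\<psi> i))"

definition fast_decay :: "'d::finite fn \<Rightarrow> bool" where
  "fast_decay f \<longleftrightarrow> (\<forall>N::nat. \<exists>C. \<forall>x. cmod (f x) \<le> C * (1 + infnorm x) powr (- real N))"

primrec smooth_decay :: "nat \<Rightarrow> 'd::finite fn \<Rightarrow> bool" where
  "smooth_decay 0 f = (continuous_on UNIV f \<and> fast_decay f)"
| "smooth_decay (Suc n) f = (continuous_on UNIV f \<and> fast_decay f \<and>
      (\<exists>f'. (\<forall>x. (f has_derivative f' x) (at x)) \<and>
            (\<forall>v\<in>(Basis :: (real^'d) set). smooth_decay n (\<lambda>x. f' x v))))"

definition coefC :: "'d::finite fn \<Rightarrow> 'd fn \<Rightarrow> int ^ 'd \<Rightarrow> complex" where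
  "coefC \<phi> f k = (LINT x|lborel. cnj (\<phi> (x - ivec k)) * f x)"

definition psi_lam :: "'d::finite fn \<Rightarrow> nat \<Rightarrow> int ^ 'd \<Rightarrow> 'd fn" where
  "psi_lam g j k = (\<lambda>x. g ((2 ^ j) *\<^sub>R x - ivec k))"

definition coefc :: "'d::finite fn \<Rightarrow> 'd fn \<Rightarrow> nat \<Rightarrow> int ^ 'd \<Rightarrow> complex" where
  "coefc g f j k = of_real (2 ^ (CARD('d) * j)) * (LINT x|lborel. cnj (psi_lam g j k x) * f x)"

definition Qop :: "(nat \<Rightarrow> 'd::finite fn) \<Rightarrow> 'd fn \<Rightarrow> nat \<Rightarrow> 'd fn" where
  "Qop \<psi> f l x = (\<Sum>i\<in>{1..2^CARD('d) - 1}.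
       \<Sum>\<^sub>\<infinity>k. coefc (\<psi> i) f l k * psi_lam (\<psi> i) l k x)"

definition Pop :: "'d::finite fn \<Rightarrow> (nat \<Rightarrow> 'd fn) \<Rightarrow> 'd fn \<Rightarrow> nat \<Rightarrow> 'd fn" where
  "Pop \<phi> \<psi> f j x = (\<Sum>\<^sub>\<infinity>k. coefC \<phi> f k * \<phi> (x - ivec k)) + (\<Sum>l<j. Qop \<psi> f l x)"

definition besov :: "real \<Rightarrow> real \<Rightarrow> 'd::finite fn \<Rightarrow> (nat \<Rightarrow> 'd fn) \<Rightarrow> 'd fn \<Rightarrow> bool" where
  "besov s p \<phi> \<psi> f \<longleftrightarrow>
     (\<forall>k. integrable lborel (\<lambda>x. cnj (\<phi> (x - ivec k)) * f x)) \<and>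
     (\<forall>i\<in>{1..2^CARD('d) - 1}. \<forall>j k. integrable lborel (\<lambda>x. cnj (psi_lam (\<psi> i) j k x) * f x)) \<and>
     (\<lambda>k. cmod (coefC \<phi> f k) powr p) summable_on UNIV \<and>
     (\<forall>i\<in>{1..2^CARD('d) - 1}. \<forall>j. (\<lambda>k. cmod (coefc (\<psi> i) f j k) powr p) summable_on UNIV) \<and>
     (\<exists>M. \<forall>j. 2 powr ((s - real CARD('d) / p) * real j) *
          (\<Sum>i\<in>{1..2^CARD('d) - 1}. \<Sum>\<^sub>\<infinity>k. cmod (coefc (\<psi> i) f j k) powr p) powr (1 / p) \<le> M)"

definition hausdorff_pre :: "real \<Rightarrow> real \<Rightarrow> 'a::metric_space set \<Rightarrow> ennreal" where
  "hausdorff_pre t \<delta> E = (INF U\<in>{U :: nat \<Rightarrow> 'a set. (\<forall>n. bounded (U n) \<and> diameter (U n) \<le> \<delta>) \<and> E \<subseteq> (\<Union>n. U n)}.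
        (\<Sum>n. ennreal (diameter (U n) powr t)))"

definition hausdorff_measure :: "real \<Rightarrow> 'a::metric_space set \<Rightarrow> ennreal" where
  "hausdorff_measure t E = (SUP \<delta>\<in>{0<..}. hausdorff_pre t \<delta> E)"

definition hausdorff_dim :: "'a::metric_space set \<Rightarrow> ereal" where
  "hausdorff_dim E = (if E = {} then -\<infinity>
      else Inf {ereal t | t. t > 0 \<and> hausdorff_measure t E = 0})"

end

theory Submission
  imports Defs
begin
lemma summable_inv_sq: "summable (\<lambda>j::nat. 1 / (real j + 1)^2)"
proof -
  have "summable (\<lambda>j::nat. inverse (real (Suc j) ^ 2))"
    by (subst summable_Suc_iff) (rule inverse_power_summable, simp)
  then show ?thesis by (simp add: field_simps)
qed

lemma oneD_bound:
  "\<exists>H. \<forall>(u::real) (G::int set). finite G \<longrightarrow> (\<Sum>n\<in>G. 1 / (1 + \<bar>u - of_int n\<bar>)^2) \<le> H"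
proof -
  define Z where "Z = (\<Sum>j. 1 / (real j + 1)^2)"
  have fin_le: "sum (\<lambda>j::nat. 1 / (real j + 1)^2) S \<le> Z" if "finite S" for S
    unfolding Z_def by (rule sum_le_suminf[OF summable_inv_sq that]) simp
  have "finite G \<Longrightarrow> (\<Sum>n\<in>G. 1 / (1 + \<bar>u - of_int n\<bar>)^2) \<le> 2 * Z" for u G
  proof -
    assume G: "finite G"
    define m where "m = \<lfloor>u\<rfloor>"
    define G1 where "G1 = {n\<in>G. n \<ge> m + 1}"
    define G2 where "G2 = {n\<in>G. n \<le> m}"
    have GU: "G = G1 \<union> G2" "G1 \<inter> G2 = {}" by (auto simp: G1_def G2_def)
    have f1: "finite G1" "finite G2" using G by (auto simp: G1_def G2_def)
    have s1: "(\<Sum>n\<in>G1. 1 / (1 + \<bar>u - of_int n\<bar>)^2) \<le> Z"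
    proof -
      have "(\<Sum>n\<in>G1. 1 / (1 + \<bar>u - of_int n\<bar>)^2) \<le> (\<Sum>n\<in>G1. 1 / (real (nat (n - m - 1)) + 1)^2)"
      proof (rule sum_mono)
        fix n assume "n \<in> G1"
        then have n: "n \<ge> m + 1" by (auto simp: G1_def)
        have "u < m + 1" unfolding m_def by linarith
        then have le: "real (nat (n - m - 1)) + 1 \<le> 1 + \<bar>u - of_int n\<bar>" using n by (simp add: of_nat_nat)
        have "0 < real (nat (n - m - 1)) + 1" by simp
        then show "1 / (1 + \<bar>u - of_int n\<bar>)^2 \<le> 1 / (real (nat (n - m - 1)) + 1)^2"
          using le by (simp add: frac_le power_mono)
      qed
      also have "\<dots> = (\<Sum>j\<in>(\<lambda>n. nat (n - m - 1)) ` G1. 1 / (real j + 1)^2)"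
      proof -
        have "inj_on (\<lambda>n. nat (n - m - 1)) G1" unfolding inj_on_def G1_def by auto
        then show ?thesis by (simp add: sum.reindex)
      qed
      also have "\<dots> \<le> Z" using f1 by (intro fin_le) simp
      finally show ?thesis .
    qed
    have s2: "(\<Sum>n\<in>G2. 1 / (1 + \<bar>u - of_int n\<bar>)^2) \<le> Z"
    proof -
      have "(\<Sum>n\<in>G2. 1 / (1 + \<bar>u - of_int n\<bar>)^2) \<le> (\<Sum>n\<in>G2. 1 / (real (nat (m - n)) + 1)^2)"
      proof (rule sum_mono)
        fix n assume "n \<in> G2"
        then have n: "n \<le> m" by (auto simp: G2_def)
        have "m \<le> u" unfolding m_def by linarith
        then have le: "real (nat (m - n)) + 1 \<le> 1 + \<bar>u - of_int n\<bar>" using n by (simp add: of_nat_nat)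
        have "0 < real (nat (m - n)) + 1" by simp
        then show "1 / (1 + \<bar>u - of_int n\<bar>)^2 \<le> 1 / (real (nat (m - n)) + 1)^2"
          using le by (simp add: frac_le power_mono)
      qed
      also have "\<dots> = (\<Sum>j\<in>(\<lambda>n. nat (m - n)) ` G2. 1 / (real j + 1)^2)"
      proof -
        have "inj_on (\<lambda>n. nat (m - n)) G2" unfolding inj_on_def G2_def by auto
        then show ?thesis by (simp add: sum.reindex)
      qed
      also have "\<dots> \<le> Z" using f1 by (intro fin_le) simp
      finally show ?thesis .
    qed
    have "(\<Sum>n\<in>G. 1 / (1 + \<bar>u - of_int n\<bar>)^2) = (\<Sum>n\<in>G1. 1 / (1 + \<bar>u - of_int n\<bar>)^2) + (\<Sum>n\<in>G2. 1 / (1 + \<bar>u - of_int n\<bar>)^2)"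
      using GU f1 by (simp add: sum.union_disjoint)
    then show ?thesis using s1 s2 by linarith
  qed
  then show ?thesis by blast
qed

lemma ivec_nth[simp]: "ivec k $ m = real_of_int (k $ m)"
  by (simp add: ivec_def)

lemma kernel_prod_bound:
  fixes z :: "real ^ 'd"
  shows "(1 + infnorm z) powr (- (2 * real CARD('d))) \<le> (\<Prod>m\<in>UNIV. 1 / (1 + \<bar>z $ m\<bar>)^2)"
proof -
  have pos: "0 < 1 + infnorm z" using infnorm_pos_le[of z] by linarith
  have "(1 + infnorm z) powr (- (2 * real CARD('d))) = 1 / (1 + infnorm z) ^ (2 * CARD('d))"
    using pos by (simp add: powr_minus_divide powr_realpow[symmetric])
  also have "(1 + infnorm z) ^ (2 * CARD('d)) = (\<Prod>m\<in>(UNIV::'d set). (1 + infnorm z)^2)"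
    by (metis power_mult mult.commute prod_constant card_UNIV_unit)
  also have "1 / (\<Prod>m\<in>(UNIV::'d set). (1 + infnorm z)^2) \<le> 1 / (\<Prod>m\<in>UNIV. (1 + \<bar>z $ m\<bar>)^2)"
  proof (rule divide_left_mono)
    show "(\<Prod>m\<in>UNIV. (1 + \<bar>z $ m\<bar>)^2) \<le> (\<Prod>m\<in>(UNIV::'d set). (1 + infnorm z)^2)"
      by (intro prod_mono conjI power_mono) (auto simp: component_le_infnorm_cart)
    show "0 < (\<Prod>m\<in>(UNIV::'d set). (1 + infnorm z)^2) * (\<Prod>m\<in>UNIV. (1 + \<bar>z $ m\<bar>)^2)"
      using pos by (intro mult_pos_pos prod_pos) auto
  qed simp
  also have "1 / (\<Prod>m\<in>UNIV. (1 + \<bar>z $ m\<bar>)^2) = (\<Prod>m\<in>UNIV. 1 / (1 + \<bar>z $ m\<bar>)^2)"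
    by (simp add: prod_dividef)
  finally show ?thesis .
qed

lemma vec_prod_sum_bound:
  fixes g :: "'d::finite \<Rightarrow> int \<Rightarrow> real"
  assumes nn: "\<And>m n. 0 \<le> g m n"
    and H: "\<And>m G. finite G \<Longrightarrow> sum (g m) G \<le> H"
    and F: "finite F"
  shows "(\<Sum>k\<in>F. \<Prod>m\<in>UNIV. g m (k $ m)) \<le> H ^ CARD('d)"
proof -
  define B where "B m = (\<lambda>k. k $ m) ` F" for m
  have finB: "finite (B m)" for m using F by (simp add: B_def)
  have sub: "F \<subseteq> vec_lambda ` (PiE UNIV B)"
  proof
    fix k assume "k \<in> F"
    then have "(\<lambda>m. k $ m) \<in> PiE UNIV B" by (auto simp: B_def)
    then show "k \<in> vec_lambda ` (PiE UNIV B)" by (rule rev_image_eqI) simp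
  qed
  have inj: "inj_on vec_lambda (PiE UNIV B)"
    by (auto simp: inj_on_def vec_lambda_inject)
  have finP: "finite (PiE UNIV B)" using finB by (simp add: finite_PiE)
  have "(\<Sum>k\<in>F. \<Prod>m\<in>UNIV. g m (k $ m)) \<le> (\<Sum>k\<in>vec_lambda ` (PiE UNIV B). \<Prod>m\<in>UNIV. g m (k $ m))"
    using sub finP nn by (intro sum_mono2) (auto intro: prod_nonneg)
  also have "\<dots> = (\<Sum>p\<in>PiE UNIV B. \<Prod>m\<in>UNIV. g m (p m))"
    using inj by (simp add: sum.reindex)
  also have "\<dots> = (\<Prod>m\<in>UNIV. \<Sum>n\<in>B m. g m n)"
    using finB by (simp add: prod_sum_PiE)
  also have "\<dots> \<le> (\<Prod>m\<in>(UNIV::'d set). H)"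
    using finB nn H by (intro prod_mono) (auto intro: sum_nonneg)
  also have "\<dots> = H ^ CARD('d)" by simp
  finally show ?thesis .
qed

lemma lattice_bound:
  "\<exists>L>0. \<forall>(y::real^'d) F. finite F \<longrightarrow>
      (\<Sum>k\<in>F. (1 + infnorm (y - ivec k)) powr (- (2 * real CARD('d::finite)))) \<le> L"
proof -
  obtain H where H0: "\<forall>(u::real) (G::int set). finite G \<longrightarrow> (\<Sum>n\<in>G. 1 / (1 + \<bar>u - of_int n\<bar>)^2) \<le> H"
    using oneD_bound by (elim exE)
  have H: "\<And>u G. finite G \<Longrightarrow> (\<Sum>n\<in>G. 1 / (1 + \<bar>u - of_int n\<bar>)^2) \<le> H"
    using H0 by simp
  have "(\<Sum>k\<in>F. (1 + infnorm (y - ivec k)) powr (- (2 * real CARD('d)))) \<le> H ^ CARD('d)"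
    if F: "finite F" for y :: "real^'d" and F
  proof -
    have "(\<Sum>k\<in>F. (1 + infnorm (y - ivec k)) powr (- (2 * real CARD('d))))
        \<le> (\<Sum>k\<in>F. \<Prod>m\<in>UNIV. (\<lambda>m n. 1 / (1 + \<bar>y $ m - of_int n\<bar>)^2) m (k $ m))"
    proof (rule sum_mono)
      fix k
      show "(1 + infnorm (y - ivec k)) powr (- (2 * real CARD('d))) \<le>
        (\<Prod>m\<in>UNIV. (\<lambda>m n. 1 / (1 + \<bar>y $ m - of_int n\<bar>)^2) m (k $ m))"
        using kernel_prod_bound[of "y - ivec k"] by simp
    qed
    also have "\<dots> \<le> H ^ CARD('d)"
      by (rule vec_prod_sum_bound[OF _ _ F]) (simp_all add: H)
    finally show ?thesis .
  qed
  then have "\<forall>(y::real^'d) F. finite F \<longrightarrow>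
      (\<Sum>k\<in>F. (1 + infnorm (y - ivec k)) powr (- (2 * real CARD('d)))) \<le> max 1 (H ^ CARD('d))"
    by (meson max.coboundedI2)
  then show ?thesis by (intro exI[of _ "max 1 (H ^ CARD('d))"]) simp
qed

lemma level_bound:
  fixes g :: "real^'d::finite \<Rightarrow> complex" and a :: "int^'d \<Rightarrow> complex" and y :: "real^'d"
  assumes L: "\<forall>(y::real^'d) F. finite F \<longrightarrow> (\<Sum>k\<in>F. (1 + infnorm (y - ivec k)) powr (- (2 * real CARD('d)))) \<le> L"
    and N: "2 * real CARD('d) \<le> N" and C: "0 \<le> C"
    and g: "\<forall>z. cmod (g z) \<le> C * (1 + infnorm z) powr (- N)"
    and A: "\<forall>k. cmod (a k) \<le> A"
    and B: "finite B" and e: "\<forall>k. k \<notin> B \<longrightarrow> cmod (a k) \<le> e" and e0: "0 \<le> e"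
    and R: "\<forall>k\<in>B. R \<le> infnorm (y - ivec k)" and R0: "0 \<le> R"
  shows "(\<lambda>k. a k * g (y - ivec k)) summable_on UNIV \<and>
         cmod (\<Sum>\<^sub>\<infinity>k. a k * g (y - ivec k)) \<le> real (card B) * (A * C * (1 + R) powr (- N)) + e * C * L"
proof -
  define X where "X = A * C * (1 + R) powr (- N)"
  define K where "K k = (1 + infnorm (y - ivec k)) powr (- (2 * real CARD('d)))" for k
  have A0: "0 \<le> A" using A norm_ge_zero order_trans by blast
  have X0: "0 \<le> X" unfolding X_def using A0 C by simp
  have pt: "cmod (a k * g (y - ivec k)) \<le> (if k \<in> B then X else 0) + e * C * K k" for k
  proof -
    have inf0: "0 \<le> infnorm (y - ivec k)" by (rule infnorm_pos_le)
    have gk: "cmod (g (y - ivec k)) \<le> C * (1 + infnorm (y - ivec k)) powr (- N)" using g by blast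
    have K0: "0 \<le> K k" unfolding K_def by simp
    show ?thesis
    proof (cases "k \<in> B")
      case True
      have "(1 + infnorm (y - ivec k)) powr (- N) \<le> (1 + R) powr (- N)"
        using R True R0 N by (intro powr_mono2') auto
      then have "cmod (g (y - ivec k)) \<le> C * (1 + R) powr (- N)"
        using gk C by (meson mult_left_mono order_trans)
      then have "cmod (a k * g (y - ivec k)) \<le> A * (C * (1 + R) powr (- N))"
        unfolding norm_mult using A A0 by (intro mult_mono) auto
      moreover have "0 \<le> C * (e * K k)" using K0 e0 C by simp
      ultimately show ?thesis using True unfolding X_def by (simp add: mult_ac)
    next
      case False
      have "(1 + infnorm (y - ivec k)) powr (- N) \<le> K k"
        unfolding K_def using N inf0 by (intro powr_mono) auto
      then have "cmod (g (y - ivec k)) \<le> C * K k"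
        using gk C by (meson mult_left_mono order_trans)
      then have "cmod (a k * g (y - ivec k)) \<le> e * (C * K k)"
        unfolding norm_mult using e False e0 by (intro mult_mono) auto
      then show ?thesis using False by (simp add: mult_ac)
    qed
  qed
  have fs: "(\<Sum>k\<in>F. cmod (a k * g (y - ivec k))) \<le> real (card B) * X + e * C * L" if F: "finite F" for F
  proof -
    have "(\<Sum>k\<in>F. cmod (a k * g (y - ivec k))) \<le> (\<Sum>k\<in>F. (if k \<in> B then X else 0) + e * C * K k)"
      by (intro sum_mono pt)
    also have "\<dots> = (\<Sum>k\<in>F. (if k \<in> B then X else 0)) + e * C * (\<Sum>k\<in>F. K k)"
      by (simp add: sum.distrib sum_distrib_left)
    also have "(\<Sum>k\<in>F. (if k \<in> B then X else 0)) = real (card (F \<inter> B)) * X"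
      using F by (simp add: sum.If_cases Int_def)
    also have "real (card (F \<inter> B)) * X \<le> real (card B) * X"
      using X0 B by (intro mult_right_mono) (auto intro: card_mono)
    also have "e * C * (\<Sum>k\<in>F. K k) \<le> e * C * L"
      using L F e0 C unfolding K_def by (intro mult_left_mono) auto
    finally show ?thesis by simp
  qed
  have abs: "(\<lambda>k. norm (a k * g (y - ivec k))) summable_on UNIV"
    by (rule nonneg_bdd_above_summable_on) (use fs in \<open>auto intro!: bdd_aboveI2\<close>)
  have "cmod (\<Sum>\<^sub>\<infinity>k. a k * g (y - ivec k)) \<le> (\<Sum>\<^sub>\<infinity>k. cmod (a k * g (y - ivec k)))"
    by (rule norm_infsum_bound[OF abs])
  also have "\<dots> \<le> real (card B) * X + e * C * L"
    by (rule infsum_le_finite_sums[OF abs]) (use fs in auto)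
  finally show ?thesis using abs_summable_summable[OF abs] unfolding X_def by simp
qed

lemma besov_bounds:
  fixes \<phi> :: "real^'d::finite \<Rightarrow> complex" and \<psi> :: "nat \<Rightarrow> real^'d \<Rightarrow> complex" and f
    and s p :: real
  assumes f: "besov s p \<phi> \<psi> f" and p: "1 \<le> p" and s: "0 \<le> s"
  obtains M where "0 \<le> M"
    "\<And>i j k. i \<in> {1..2^CARD('d) - 1} \<Longrightarrow> cmod (coefc (\<psi> i) f j k) \<le> M * 2 powr (real CARD('d) * real j)"
    "\<And>i j \<epsilon>. i \<in> {1..2^CARD('d) - 1} \<Longrightarrow> 0 \<le> \<epsilon> \<Longrightarrow>
        finite {k. 2 powr (- \<epsilon> * real j) < cmod (coefc (\<psi> i) f j k)} \<and>
        real (card {k. 2 powr (- \<epsilon> * real j) < cmod (coefc (\<psi> i) f j k)})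
          \<le> M powr p * 2 powr ((real CARD('d) - s * p + \<epsilon> * p) * real j)"
proof -
  let ?I = "{1..2^CARD('d) - 1} :: nat set"
  let ?D = "real CARD('d)"
  define c where "c i j k = cmod (coefc (\<psi> i) f j k)" for i j k
  define T where "T i j = (\<Sum>\<^sub>\<infinity>k. c i j k powr p)" for i j
  define S where "S j = (\<Sum>i\<in>?I. T i j)" for j
  have summ: "\<And>i j. i \<in> ?I \<Longrightarrow> (\<lambda>k. c i j k powr p) summable_on UNIV"
    using f unfolding besov_def c_def by blast
  obtain M where M: "\<And>j. 2 powr ((s - ?D / p) * real j) * S j powr (1 / p) \<le> M"
    using f unfolding besov_def S_def T_def c_def by blast
  have T0: "0 \<le> T i j" for i j unfolding T_def by (rule infsum_nonneg) simp
  have S0: "0 \<le> S j" for j unfolding S_def using T0 by (simp add: sum_nonneg)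
  have M0: "0 \<le> M" using M[of 0] S0[of 0] by (meson order_trans powr_ge_zero zero_le_mult_iff)
  have p0: "0 < p" using p by simp
  have Sb: "S j \<le> M powr p * 2 powr ((?D - s * p) * real j)" for j
  proof -
    have "S j powr (1 / p) \<le> M * 2 powr (- ((s - ?D / p) * real j))"
    proof -
      have "S j powr (1 / p) = 2 powr (- ((s - ?D / p) * real j)) * (2 powr ((s - ?D / p) * real j) * S j powr (1 / p))"
        by (simp add: mult.assoc[symmetric] powr_add[symmetric])
      also have "\<dots> \<le> 2 powr (- ((s - ?D / p) * real j)) * M"
        using M[of j] by (intro mult_left_mono) auto
      finally show ?thesis by (simp add: mult.commute)
    qed
    then have "(S j powr (1 / p)) powr p \<le> (M * 2 powr (- ((s - ?D / p) * real j))) powr p"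
      using p0 by (intro powr_mono2) auto
    also have "(S j powr (1 / p)) powr p = S j"
      using p0 S0 by (simp add: powr_powr powr_one)
    also have "(M * 2 powr (- ((s - ?D / p) * real j))) powr p = M powr p * 2 powr ((?D - s * p) * real j)"
    proof -
      have ex: "- ((s - ?D / p) * real j * p) = (?D - s * p) * real j"
        using p0 by (simp add: field_simps)
      show ?thesis using M0 by (simp add: powr_mult powr_powr ex)
    qed
    finally show ?thesis .
  qed
  have Tb: "T i j \<le> M powr p * 2 powr ((?D - s * p) * real j)" if i: "i \<in> ?I" for i j
  proof -
    have "T i j \<le> S j" unfolding S_def using i T0 by (intro member_le_sum) auto
    then show ?thesis using Sb[of j] by linarith
  qed
  have single: "c i j k powr p \<le> T i j" if i: "i \<in> ?I" for i j k
  proof -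
    have "sum (\<lambda>k. c i j k powr p) {k} \<le> T i j"
      unfolding T_def by (rule finite_sum_le_infsum[OF summ[OF i]]) auto
    then show ?thesis by simp
  qed
  show ?thesis
  proof (rule that[OF M0])
    fix i j k assume i: "i \<in> ?I"
    have "c i j k powr p \<le> M powr p * 2 powr ((?D - s * p) * real j)"
      using single[OF i, of j k] Tb[OF i, of j] by linarith
    then have "(c i j k powr p) powr (1 / p) \<le> (M powr p * 2 powr ((?D - s * p) * real j)) powr (1 / p)"
      using p0 by (intro powr_mono2) auto
    also have "(c i j k powr p) powr (1 / p) = c i j k"
      using p0 by (simp add: powr_powr powr_one c_def)
    also have "(M powr p * 2 powr ((?D - s * p) * real j)) powr (1 / p) = M * 2 powr ((?D / p - s) * real j)"
      using p0 M0 by (simp add: powr_mult powr_powr field_simps)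
    also have "M * 2 powr ((?D / p - s) * real j) \<le> M * 2 powr (?D * real j)"
    proof (intro mult_left_mono M0 powr_mono)
      have "?D / p \<le> ?D" using p by (simp add: divide_le_eq_1 field_simps)
      then show "(?D / p - s) * real j \<le> ?D * real j" using s by (intro mult_right_mono) auto
    qed simp
    finally show "cmod (coefc (\<psi> i) f j k) \<le> M * 2 powr (?D * real j)" unfolding c_def .
  next
    fix i j and \<epsilon> :: real assume i: "i \<in> ?I" and e: "0 \<le> \<epsilon>"
    define Bd where "Bd = {k. 2 powr (- \<epsilon> * real j) < cmod (coefc (\<psi> i) f j k)}"
    define K where "K = M powr p * 2 powr ((?D - s * p + \<epsilon> * p) * real j)"
    have cardF: "real (card F) \<le> K" if F: "finite F" "F \<subseteq> Bd" for F
    proof -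
      have "real (card F) * 2 powr (- \<epsilon> * real j * p) = (\<Sum>k\<in>F. 2 powr (- \<epsilon> * real j * p))" by simp
      also have "\<dots> \<le> (\<Sum>k\<in>F. c i j k powr p)"
      proof (rule sum_mono)
        fix k assume "k \<in> F"
        then have "2 powr (- \<epsilon> * real j) < c i j k" using F unfolding Bd_def c_def by auto
        then have "(2 powr (- \<epsilon> * real j)) powr p \<le> c i j k powr p"
          using p0 by (intro powr_mono2) auto
        then show "2 powr (- \<epsilon> * real j * p) \<le> c i j k powr p" by (simp add: powr_powr)
      qed
      also have "\<dots> \<le> T i j" unfolding T_def by (rule finite_sum_le_infsum[OF summ[OF i] F(1)]) auto
      also have "\<dots> \<le> M powr p * 2 powr ((?D - s * p) * real j)" by (rule Tb[OF i])
      finally have "real (card F) * 2 powr (- \<epsilon> * real j * p) \<le> M powr p * 2 powr ((?D - s * p) * real j)" .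
      then have "real (card F) \<le> M powr p * 2 powr ((?D - s * p) * real j) / 2 powr (- \<epsilon> * real j * p)"
        by (simp add: field_simps)
      also have "\<dots> = K" unfolding K_def by (simp add: powr_minus field_simps powr_add[symmetric] algebra_simps)
      finally show ?thesis .
    qed
    have fin: "finite Bd"
    proof (rule conjunct1[OF finite_if_finite_subsets_card_bdd])
      fix G assume "G \<subseteq> Bd" "finite G"
      then have "real (card G) \<le> K" using cardF by blast
      then show "card G \<le> nat \<lceil>K\<rceil>" by linarith
    qed
    show "finite {k. 2 powr (- \<epsilon> * real j) < cmod (coefc (\<psi> i) f j k)} \<and>
        real (card {k. 2 powr (- \<epsilon> * real j) < cmod (coefc (\<psi> i) f j k)})
          \<le> M powr p * 2 powr ((?D - s * p + \<epsilon> * p) * real j)"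
      using fin cardF[OF fin] unfolding Bd_def K_def by simp
  qed
qed

definition Bad :: "(nat \<Rightarrow> real^'d::finite \<Rightarrow> complex) \<Rightarrow> (real^'d \<Rightarrow> complex) \<Rightarrow> real \<Rightarrow> nat \<Rightarrow> nat \<Rightarrow> (int^'d) set" where
  "Bad \<psi> f \<epsilon> i j = {k. 2 powr (- \<epsilon> * real j) < cmod (coefc (\<psi> i) f j k)}"

definition Exc :: "(nat \<Rightarrow> real^'d::finite \<Rightarrow> complex) \<Rightarrow> (real^'d \<Rightarrow> complex) \<Rightarrow> real \<Rightarrow> real \<Rightarrow> nat \<Rightarrow> (real^'d) set" where
  "Exc \<psi> f \<epsilon> \<eta> j = (\<Union>i\<in>{1..2^CARD('d) - 1}. \<Union>k\<in>Bad \<psi> f \<epsilon> i j.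
      cball (2 powr (- real j) *\<^sub>R ivec k) (sqrt (real CARD('d)) * 2 powr ((\<eta> - 1) * real j)))"

lemma far_from_center:
  fixes x :: "real^'d::finite" and k :: "int^'d"
  assumes "x \<notin> cball (2 powr (- real j) *\<^sub>R ivec k) (sqrt (real CARD('d)) * 2 powr ((\<eta> - 1) * real j))"
  shows "2 powr (\<eta> * real j) \<le> infnorm ((2 ^ j) *\<^sub>R x - ivec k)"
proof -
  let ?c = "2 powr (- real j) *\<^sub>R ivec k"
  have "sqrt (real CARD('d)) * 2 powr ((\<eta> - 1) * real j) < norm (x - ?c)"
    using assms by (simp add: dist_norm norm_minus_commute)
  also have "norm (x - ?c) \<le> sqrt (real CARD('d)) * infnorm (x - ?c)"
    using norm_le_infnorm[of "x - ?c"] by simp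
  finally have "2 powr ((\<eta> - 1) * real j) < infnorm (x - ?c)"
    by (simp add: mult_less_cancel_left_pos)
  then have "2 ^ j * 2 powr ((\<eta> - 1) * real j) \<le> 2 ^ j * infnorm (x - ?c)"
    by simp
  also have "2 ^ j * infnorm (x - ?c) = infnorm ((2 ^ j) *\<^sub>R (x - ?c))"
    by (simp add: infnorm_mul)
  also have "(2 ^ j) *\<^sub>R (x - ?c) = (2 ^ j) *\<^sub>R x - ivec k"
  proof -
    have "(2::real) ^ j * 2 powr (- real j) = 1"
      by (simp add: powr_realpow[symmetric] powr_add[symmetric])
    then show ?thesis by (simp add: scaleR_diff_right)
  qed
  also have "(2::real) ^ j * 2 powr ((\<eta> - 1) * real j) = 2 powr (\<eta> * real j)"
    by (simp add: powr_realpow[symmetric] powr_add[symmetric] algebra_simps)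
  finally show ?thesis .
qed

lemma smooth_decay_fast: "smooth_decay n g \<Longrightarrow> fast_decay g"
  by (cases n) auto

lemma core_bound:
  fixes \<phi> :: "real^'d::finite \<Rightarrow> complex" and \<psi> :: "nat \<Rightarrow> real^'d \<Rightarrow> complex" and f
    and s p \<epsilon> \<eta> :: real
  assumes f: "besov s p \<phi> \<psi> f" and p: "1 \<le> p" and s: "0 \<le> s"
    and e: "0 < \<epsilon>" and h: "0 < \<eta>"
    and dec: "\<forall>i\<in>{1..2^CARD('d) - 1}. fast_decay (\<psi> i)"
  shows "\<exists>T. summable T \<and> (\<forall>j x. x \<notin> Exc \<psi> f \<epsilon> \<eta> j \<longrightarrow> cmod (Qop \<psi> f j x) \<le> T j)"
proof -
  let ?I = "{1..2^CARD('d) - 1} :: nat set"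
  let ?D = "real CARD('d)"
  obtain M where M0: "0 \<le> M"
    and Mc: "\<And>i j k. i \<in> ?I \<Longrightarrow> cmod (coefc (\<psi> i) f j k) \<le> M * 2 powr (?D * real j)"
    and Mb: "\<And>i j \<epsilon>. i \<in> ?I \<Longrightarrow> 0 \<le> \<epsilon> \<Longrightarrow>
        finite {k. 2 powr (- \<epsilon> * real j) < cmod (coefc (\<psi> i) f j k)} \<and>
        real (card {k. 2 powr (- \<epsilon> * real j) < cmod (coefc (\<psi> i) f j k)})
          \<le> M powr p * 2 powr ((?D - s * p + \<epsilon> * p) * real j)"
    using besov_bounds[OF f p s] by metis
  obtain L where L0: "L > 0" and L: "\<forall>(y::real^'d) F. finite F \<longrightarrow>
      (\<Sum>k\<in>F. (1 + infnorm (y - ivec k)) powr (- (2 * ?D))) \<le> L"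
    using lattice_bound by (elim exE conjE)
  define N :: nat where "N = nat \<lceil>(2 * ?D + \<epsilon> * p + 1) / \<eta> + 2 * ?D\<rceil>"
  have Nge: "(2 * ?D + \<epsilon> * p + 1) / \<eta> + 2 * ?D \<le> real N" unfolding N_def by linarith
  have q0: "0 \<le> (2 * ?D + \<epsilon> * p + 1) / \<eta>" using e p h by simp
  have N1: "2 * ?D \<le> real N" using Nge q0 by linarith
  have N2: "2 * ?D + \<epsilon> * p + 1 \<le> \<eta> * real N"
  proof -
    have "(2 * ?D + \<epsilon> * p + 1) / \<eta> \<le> real N" using Nge by simp
    then show ?thesis using h by (simp add: divide_le_eq mult.commute)
  qed
  have "\<forall>i\<in>?I. \<exists>C. \<forall>z. cmod (\<psi> i z) \<le> C * (1 + infnorm z) powr (- real N)"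
    using dec unfolding fast_decay_def by blast
  then obtain Cf where Cf: "\<And>i z. i \<in> ?I \<Longrightarrow> cmod (\<psi> i z) \<le> Cf i * (1 + infnorm z) powr (- real N)"
    by metis
  define C where "C = (\<Sum>i\<in>?I. max 0 (Cf i))"
  have C0: "0 \<le> C" unfolding C_def by (intro sum_nonneg) simp
  have CfC: "cmod (\<psi> i z) \<le> C * (1 + infnorm z) powr (- real N)" if i: "i \<in> ?I" for i z
  proof -
    have "Cf i \<le> C" unfolding C_def using i
      by (rule order_trans[OF max.cobounded2 member_le_sum[where f="\<lambda>i. max 0 (Cf i)"]]) auto
    then show ?thesis using Cf[OF i, of z] by (meson mult_right_mono order_trans powr_ge_zero)
  qed
  define T where "T j = real (card ?I) * (M powr p * M * C * (1/2) ^ j + C * L * (2 powr (- \<epsilon>)) ^ j)" for j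
  have "summable T"
  proof -
    have r: "norm (2 powr (- \<epsilon>)) < (1::real)" using e by (simp add: powr_less_one)
    have "summable (\<lambda>j. M powr p * M * C * (1/2::real) ^ j + C * L * (2 powr (- \<epsilon>)) ^ j)"
      by (intro summable_add summable_mult summable_geometric r) simp
    then show ?thesis unfolding T_def by (rule summable_mult)
  qed
  moreover have "cmod (Qop \<psi> f j x) \<le> T j" if x: "x \<notin> Exc \<psi> f \<epsilon> \<eta> j" for j x
  proof -
    have perI: "cmod (\<Sum>\<^sub>\<infinity>k. coefc (\<psi> i) f j k * psi_lam (\<psi> i) j k x)
        \<le> M powr p * M * C * (1/2) ^ j + C * L * (2 powr (- \<epsilon>)) ^ j" if i: "i \<in> ?I" for i
    proof -
      define B where "B = Bad \<psi> f \<epsilon> i j"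
      have Bfin: "finite B" and Bcard: "real (card B) \<le> M powr p * 2 powr ((?D - s * p + \<epsilon> * p) * real j)"
        using Mb[OF i, of \<epsilon> j] e unfolding B_def Bad_def by auto
      have far: "\<forall>k\<in>B. 2 powr (\<eta> * real j) \<le> infnorm ((2 ^ j) *\<^sub>R x - ivec k)"
      proof
        fix k assume "k \<in> B"
        then have "x \<notin> cball (2 powr (- real j) *\<^sub>R ivec k) (sqrt ?D * 2 powr ((\<eta> - 1) * real j))"
          using x i unfolding Exc_def B_def by blast
        then show "2 powr (\<eta> * real j) \<le> infnorm ((2 ^ j) *\<^sub>R x - ivec k)"
          by (rule far_from_center)
      qed
      have gi: "\<forall>z. cmod (\<psi> i z) \<le> C * (1 + infnorm z) powr (- real N)" using CfC[OF i] by blast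
      have Ai: "\<forall>k. cmod (coefc (\<psi> i) f j k) \<le> M * 2 powr (?D * real j)" using Mc[OF i] by blast
      have ei: "\<forall>k. k \<notin> B \<longrightarrow> cmod (coefc (\<psi> i) f j k) \<le> 2 powr (- \<epsilon> * real j)"
        unfolding B_def Bad_def by auto
      have lb: "cmod (\<Sum>\<^sub>\<infinity>k. coefc (\<psi> i) f j k * \<psi> i ((2 ^ j) *\<^sub>R x - ivec k))
          \<le> real (card B) * (M * 2 powr (?D * real j) * C * (1 + 2 powr (\<eta> * real j)) powr (- real N))
             + 2 powr (- \<epsilon> * real j) * C * L"
        using level_bound[OF L N1 C0 gi Ai Bfin ei _ far] by simp
      define R where "R = 2 powr (\<eta> * real j)"
      have R0: "0 < R" unfolding R_def by simp
      have "(1 + R) powr (- real N) \<le> R powr (- real N)"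
        using R0 by (intro powr_mono2') auto
      also have "R powr (- real N) = 2 powr (- (\<eta> * real N) * real j)"
        unfolding R_def by (simp add: powr_powr algebra_simps)
      finally have RN: "(1 + R) powr (- real N) \<le> 2 powr (- (\<eta> * real N) * real j)" .
      have t1: "real (card B) * (M * 2 powr (?D * real j) * C * (1 + R) powr (- real N))
          \<le> M powr p * M * C * (1/2) ^ j"
      proof -
        have "real (card B) * (M * 2 powr (?D * real j) * C * (1 + R) powr (- real N))
           \<le> (M powr p * 2 powr ((?D - s * p + \<epsilon> * p) * real j)) * (M * 2 powr (?D * real j) * C * 2 powr (- (\<eta> * real N) * real j))"
          using Bcard RN M0 C0 by (intro mult_mono) (auto intro!: mult_left_mono mult_nonneg_nonneg)
        also have "\<dots> = M powr p * M * C * 2 powr ((?D - s * p + \<epsilon> * p + ?D - \<eta> * real N) * real j)"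
          by (simp add: powr_add[symmetric] algebra_simps)
        also have "\<dots> \<le> M powr p * M * C * 2 powr (- 1 * real j)"
        proof (intro mult_left_mono powr_mono)
          have "?D - s * p + \<epsilon> * p + ?D - \<eta> * real N \<le> - 1"
            using N2 s p by (simp add: algebra_simps) (smt (verit) mult_nonneg_nonneg)
          then show "(?D - s * p + \<epsilon> * p + ?D - \<eta> * real N) * real j \<le> - 1 * real j"
            by (intro mult_right_mono) auto
        qed (use M0 C0 in auto)
        also have "2 powr (- 1 * real j) = (1/2::real) ^ j"
          by (simp add: powr_realpow[symmetric] powr_minus powr_powr power_one_over inverse_eq_divide)
        finally show ?thesis .
      qed
      have t2: "2 powr (- \<epsilon> * real j) * C * L = C * L * (2 powr (- \<epsilon>)) ^ j"
        by (simp add: powr_realpow[symmetric] powr_powr mult_ac)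
      show ?thesis using lb t1 t2 unfolding psi_lam_def R_def by linarith
    qed
    have "cmod (Qop \<psi> f j x) \<le> (\<Sum>i\<in>?I. cmod (\<Sum>\<^sub>\<infinity>k. coefc (\<psi> i) f j k * psi_lam (\<psi> i) j k x))"
      unfolding Qop_def by (rule norm_sum)
    also have "\<dots> \<le> (\<Sum>i\<in>?I. M powr p * M * C * (1/2) ^ j + C * L * (2 powr (- \<epsilon>)) ^ j)"
      by (rule sum_mono) (rule perI)
    also have "\<dots> = T j" unfolding T_def by simp
    finally show ?thesis .
  qed
  ultimately show ?thesis by blast
qed

lemma conv_outside:
  fixes \<phi> :: "real^'d::finite \<Rightarrow> complex" and \<psi> :: "nat \<Rightarrow> real^'d \<Rightarrow> complex" and f
    and s p \<epsilon> \<eta> :: real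
  assumes f: "besov s p \<phi> \<psi> f" and p: "1 \<le> p" and s: "0 \<le> s"
    and e: "0 < \<epsilon>" and h: "0 < \<eta>"
    and dec: "\<forall>i\<in>{1..2^CARD('d) - 1}. fast_decay (\<psi> i)"
    and x: "\<forall>j\<ge>J. x \<notin> Exc \<psi> f \<epsilon> \<eta> j"
  shows "convergent (\<lambda>j. Pop \<phi> \<psi> f j x)"
proof -
  obtain T where T: "summable T" and Tb: "\<forall>j x. x \<notin> Exc \<psi> f \<epsilon> \<eta> j \<longrightarrow> cmod (Qop \<psi> f j x) \<le> T j"
    using core_bound[OF f p s e h dec] by blast
  have "summable (\<lambda>l. Qop \<psi> f l x)"
  proof (rule summable_comparison_test'[OF T])
    fix n assume "J \<le> n"
    then show "norm (Qop \<psi> f n x) \<le> T n" using x Tb by simp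
  qed
  then have "convergent (\<lambda>j. \<Sum>l<j. Qop \<psi> f l x)" by (simp add: summable_iff_convergent)
  then have "convergent (\<lambda>j. (\<Sum>\<^sub>\<infinity>k. coefC \<phi> f k * \<phi> (x - ivec k)) + (\<Sum>l<j. Qop \<psi> f l x))"
    by (intro convergent_add convergent_const)
  then show ?thesis unfolding Pop_def by simp
qed

lemma hausdorff_zero_abstract:
  fixes E :: "'a::euclidean_space set" and Bj :: "nat \<Rightarrow> 'b set"
    and cen :: "nat \<Rightarrow> 'b \<Rightarrow> 'a" and r K :: "nat \<Rightarrow> real" and t :: real
  assumes Ecov: "\<And>x J. x \<in> E \<Longrightarrow> \<exists>j\<ge>J. \<exists>b\<in>Bj j. x \<in> cball (cen j b) (r j)"
    and fin: "\<And>j. finite (Bj j)" and card: "\<And>j. real (card (Bj j)) \<le> K j"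
    and r0: "\<And>j. 0 \<le> r j" and rlim: "r \<longlonglongrightarrow> 0"
    and summ: "summable (\<lambda>j. K j * (2 * r j) powr t)" and t: "0 < t"
  shows "hausdorff_measure t E = 0"
proof -
  have K0: "0 \<le> K j" for j using card[of j] by linarith
  have pre0: "hausdorff_pre t \<delta> E = 0" if d: "0 < \<delta>" for \<delta>
  proof -
    have "hausdorff_pre t \<delta> E \<le> 0 + ennreal e" if e: "0 < e" for e
    proof -
      obtain J1 where J1: "\<And>n. n \<ge> J1 \<Longrightarrow> norm (\<Sum>i. K (i + n) * (2 * r (i + n)) powr t) < e"
        using suminf_exist_split[OF e summ] by blast
      obtain J2 where J2: "\<And>n. n \<ge> J2 \<Longrightarrow> norm (r n - 0) < \<delta> / 2"
        using LIMSEQ_D[OF rlim, of "\<delta>/2"] d by auto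
      define J where "J = max J1 J2"
      define G where "G i = K (i + J) * (2 * r (i + J)) powr t" for i
      have Gs: "summable G" unfolding G_def using summ by (rule summable_ignore_initial_segment)
      have G0: "0 \<le> G i" for i unfolding G_def using K0 by simp
      have Ge: "suminf G \<le> e" using J1[of J] unfolding G_def J_def by simp
      have rd: "2 * r j \<le> \<delta>" if "J \<le> j" for j using J2[of j] that r0[of j] unfolding J_def by simp
      define xs where "xs j = (SOME xs. set xs = Bj j \<and> distinct xs)" for j
      have xs: "set (xs j) = Bj j \<and> distinct (xs j)" for j
        unfolding xs_def by (rule someI_ex) (rule finite_distinct_list[OF fin])
      define V where "V j m = (if m < length (xs (j + J)) then cball (cen (j + J) (xs (j + J) ! m)) (r (j + J)) else {})" for j m
      define U where "U n = (case prod_decode n of (j, m) \<Rightarrow> V j m)" for n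
      have Vd: "diameter (V j m) \<le> \<delta>" for j m
        unfolding V_def using rd[of "j + J"] r0[of "j + J"] d by simp
      have Vb: "bounded (V j m)" for j m unfolding V_def by simp
      have hV: "diameter (V j m) powr t = (if m < length (xs (j + J)) then (2 * r (j + J)) powr t else 0)" for j m
        unfolding V_def using r0[of "j + J"] t by simp
      have cov: "E \<subseteq> (\<Union>n. U n)"
      proof
        fix x assume "x \<in> E"
        then obtain j b where j: "j \<ge> J" and b: "b \<in> Bj j" and xb: "x \<in> cball (cen j b) (r j)"
          using Ecov by blast
        obtain m where m: "m < length (xs j)" "xs j ! m = b"
          using b xs[of j] by (metis in_set_conv_nth)
        have jj: "j - J + J = j" using j by simp
        have "x \<in> V (j - J) m" unfolding V_def jj using m xb by simp
        then have "x \<in> U (prod_encode (j - J, m))" unfolding U_def by simp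
        then show "x \<in> (\<Union>n. U n)" by blast
      qed
      define h where "h n = diameter (U n) powr t" for n
      have h0: "0 \<le> h n" for n unfolding h_def by simp
      have inner: "(\<Sum>m<Mm. diameter (V j m) powr t) \<le> G j" for j Mm
      proof -
        have "(\<Sum>m<Mm. diameter (V j m) powr t) = (\<Sum>m\<in>{..<Mm} \<inter> {m. m < length (xs (j + J))}. (2 * r (j + J)) powr t)"
          by (simp add: hV sum.If_cases)
        also have "\<dots> \<le> (\<Sum>m\<in>{..<length (xs (j + J))}. (2 * r (j + J)) powr t)"
          by (intro sum_mono2) auto
        also have "\<dots> = real (card (Bj (j + J))) * (2 * r (j + J)) powr t"
          using xs[of "j + J"] distinct_card[of "xs (j + J)"] by simp
        also have "\<dots> \<le> G j" unfolding G_def using card[of "j + J"] by (intro mult_right_mono) auto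
        finally show ?thesis .
      qed
      have ps: "(\<Sum>n<N. h n) \<le> e" for N
      proof -
        have inj: "inj_on prod_decode {..<N}" by (meson inj_prod_decode inj_on_subset subset_UNIV)
        obtain Jm Mm where sub: "prod_decode ` {..<N} \<subseteq> {..<Jm} \<times> {..<Mm}"
        proof -
          have "finite (prod_decode ` {..<N})" by simp
          then obtain Jm where "\<forall>q\<in>prod_decode ` {..<N}. fst q < Jm"
            using finite_nat_bounded[of "fst ` prod_decode ` {..<N}"] by (auto simp: lessThan_def)
          moreover obtain Mm where "\<forall>q\<in>prod_decode ` {..<N}. snd q < Mm"
            using finite_nat_bounded[of "snd ` prod_decode ` {..<N}"] by (auto simp: lessThan_def)
          ultimately have "prod_decode ` {..<N} \<subseteq> {..<Jm} \<times> {..<Mm}"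
          proof (intro subsetI)
            fix q assume "\<forall>q\<in>prod_decode ` {..<N}. fst q < Jm" "\<forall>q\<in>prod_decode ` {..<N}. snd q < Mm"
              "q \<in> prod_decode ` {..<N}"
            then have "fst q < Jm" "snd q < Mm" by blast+
            then show "q \<in> {..<Jm} \<times> {..<Mm}" by (cases q) simp
          qed
          then show ?thesis by (rule that)
        qed
        have hn: "h n = (\<lambda>(j,m). diameter (V j m) powr t) (prod_decode n)" for n
          unfolding h_def U_def by (cases "prod_decode n") simp
        have "(\<Sum>n<N. h n) = (\<Sum>q\<in>prod_decode ` {..<N}. (\<lambda>(j,m). diameter (V j m) powr t) q)"
          using sum.reindex[OF inj, of "\<lambda>(j,m). diameter (V j m) powr t"] hn by simp
        also have "\<dots> \<le> (\<Sum>q\<in>{..<Jm} \<times> {..<Mm}. (\<lambda>(j,m). diameter (V j m) powr t) q)"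
          using sub by (intro sum_mono2) (auto simp: split_beta)
        also have "\<dots> = (\<Sum>j<Jm. \<Sum>m<Mm. diameter (V j m) powr t)"
          by (rule sum.cartesian_product[symmetric])
        also have "\<dots> \<le> (\<Sum>j<Jm. G j)" by (intro sum_mono inner)
        also have "\<dots> \<le> suminf G" using Gs G0 by (intro sum_le_suminf) auto
        finally show ?thesis using Ge by linarith
      qed
      have hs: "summable h" by (rule summableI_nonneg_bounded[OF h0 ps])
      have "(\<Sum>n. ennreal (diameter (U n) powr t)) = ennreal (suminf h)"
        unfolding h_def[symmetric] using h0 hs by (simp add: suminf_ennreal2)
      also have "\<dots> \<le> ennreal e" using suminf_le_const[OF hs ps] by (simp add: ennreal_leI)
      finally have sumle: "(\<Sum>n. ennreal (diameter (U n) powr t)) \<le> ennreal e" .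
      have Umem: "U \<in> {U. (\<forall>n. bounded (U n) \<and> diameter (U n) \<le> \<delta>) \<and> E \<subseteq> (\<Union>n. U n)}"
      proof -
        have Ufs: "U n = V (fst (prod_decode n)) (snd (prod_decode n))" for n
          unfolding U_def by (cases "prod_decode n") simp
        show ?thesis using cov Vd Vb unfolding Ufs by simp
      qed
      have "hausdorff_pre t \<delta> E \<le> (\<Sum>n. ennreal (diameter (U n) powr t))"
        unfolding hausdorff_pre_def by (rule INF_lower[OF Umem])
      then show ?thesis using sumle by simp
    qed
    then have "hausdorff_pre t \<delta> E \<le> 0" by (rule ennreal_le_epsilon) 
    then show ?thesis by simp
  qed
  show ?thesis unfolding hausdorff_measure_def using pre0 by simp
qed

lemma E_sub_Exc:
  fixes \<phi> :: "real^'d::finite \<Rightarrow> complex" and \<psi> :: "nat \<Rightarrow> real^'d \<Rightarrow> complex" and f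
    and s p \<epsilon> \<eta> :: real
  assumes f: "besov s p \<phi> \<psi> f" and p: "1 \<le> p" and s: "0 \<le> s"
    and e: "0 < \<epsilon>" and h: "0 < \<eta>"
    and dec: "\<forall>i\<in>{1..2^CARD('d) - 1}. fast_decay (\<psi> i)"
    and x: "\<not> convergent (\<lambda>j. Pop \<phi> \<psi> f j x)"
  shows "\<exists>j\<ge>J. x \<in> Exc \<psi> f \<epsilon> \<eta> j"
  using conv_outside[OF f p s e h dec, of J x] x by blast

lemma pow_lim0: "0 < c \<Longrightarrow> (\<lambda>j::nat. (2::real) powr (- c * real j)) \<longlonglongrightarrow> 0"
proof -
  assume c: "0 < c"
  have "(\<lambda>j::nat. (2 powr (- c)) ^ j) \<longlonglongrightarrow> 0"
    using c by (intro LIMSEQ_power_zero) (simp add: powr_less_one)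
  moreover have "(2 powr (- c)) ^ j = (2::real) powr (- c * real j)" for j :: nat
    by (simp add: powr_realpow[symmetric] powr_powr mult.commute)
  ultimately show ?thesis by simp
qed

lemma empty_case:
  fixes \<phi> :: "real^'d::finite \<Rightarrow> complex" and \<psi> :: "nat \<Rightarrow> real^'d \<Rightarrow> complex" and f
    and s p :: real
  assumes f: "besov s p \<phi> \<psi> f" and p: "1 \<le> p" and s: "0 \<le> s"
    and dec: "\<forall>i\<in>{1..2^CARD('d) - 1}. fast_decay (\<psi> i)"
    and neg: "real CARD('d) - s * p < 0"
  shows "{x. \<not> convergent (\<lambda>j. Pop \<phi> \<psi> f j x)} = {}"
proof -
  let ?I = "{1..2^CARD('d) - 1} :: nat set"
  let ?D = "real CARD('d)"
  obtain M where M0: "0 \<le> M"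
    and Mb: "\<And>i j \<epsilon>. i \<in> ?I \<Longrightarrow> 0 \<le> \<epsilon> \<Longrightarrow>
        finite {k. 2 powr (- \<epsilon> * real j) < cmod (coefc (\<psi> i) f j k)} \<and>
        real (card {k. 2 powr (- \<epsilon> * real j) < cmod (coefc (\<psi> i) f j k)})
          \<le> M powr p * 2 powr ((?D - s * p + \<epsilon> * p) * real j)"
    using besov_bounds[OF f p s] by metis
  define \<epsilon> where "\<epsilon> = (s * p - ?D) / (2 * p)"
  have e0: "0 < \<epsilon>" unfolding \<epsilon>_def using neg p by simp
  define c where "c = (s * p - ?D) / 2"
  have c0: "0 < c" unfolding c_def using neg by simp
  have ex: "(?D - s * p + \<epsilon> * p) * real j = - c * real j" for j
    unfolding \<epsilon>_def c_def using p by (simp add: field_simps)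
  have "(\<lambda>j. M powr p * 2 powr (- c * real j)) \<longlonglongrightarrow> M powr p * 0"
    by (intro tendsto_mult tendsto_const pow_lim0 c0)
  then have "eventually (\<lambda>j. M powr p * 2 powr (- c * real j) < 1) sequentially"
    by (intro order_tendstoD(2)) auto
  then obtain J where J: "\<And>j. j \<ge> J \<Longrightarrow> M powr p * 2 powr (- c * real j) < 1"
    unfolding eventually_sequentially by blast
  have noexc: "x \<notin> Exc \<psi> f \<epsilon> 1 j" if j: "j \<ge> J" for x j
  proof -
    have "Bad \<psi> f \<epsilon> i j = {}" if i: "i \<in> ?I" for i
    proof -
      have fin: "finite (Bad \<psi> f \<epsilon> i j)" and cb: "real (card (Bad \<psi> f \<epsilon> i j)) \<le> M powr p * 2 powr (- c * real j)"
        using Mb[OF i, of \<epsilon> j] e0 ex[of j] unfolding Bad_def by auto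
      then have "card (Bad \<psi> f \<epsilon> i j) = 0" using J[OF j] by linarith
      then show ?thesis using fin by simp
    qed
    then show ?thesis unfolding Exc_def by auto
  qed
  show ?thesis
  proof (rule ccontr)
    assume "{x. \<not> convergent (\<lambda>j. Pop \<phi> \<psi> f j x)} \<noteq> {}"
    then obtain x where x: "\<not> convergent (\<lambda>j. Pop \<phi> \<psi> f j x)" by blast
    obtain j where "j \<ge> J" "x \<in> Exc \<psi> f \<epsilon> 1 j"
      using E_sub_Exc[OF f p s e0 _ dec x, of 1 J] by auto
    then show False using noexc by blast
  qed
qed

lemma measure_zero_case:
  fixes \<phi> :: "real^'d::finite \<Rightarrow> complex" and \<psi> :: "nat \<Rightarrow> real^'d \<Rightarrow> complex" and f
    and s p t :: real
  assumes f: "besov s p \<phi> \<psi> f" and p: "1 \<le> p" and s: "0 \<le> s"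
    and dec: "\<forall>i\<in>{1..2^CARD('d) - 1}. fast_decay (\<psi> i)"
    and t0: "0 < t" and tgt: "real CARD('d) - s * p < t"
  shows "hausdorff_measure t {x. \<not> convergent (\<lambda>j. Pop \<phi> \<psi> f j x)} = 0"
proof -
  let ?I = "{1..2^CARD('d) - 1} :: nat set"
  let ?D = "real CARD('d)"
  obtain M where M0: "0 \<le> M"
    and Mb: "\<And>i j \<epsilon>. i \<in> ?I \<Longrightarrow> 0 \<le> \<epsilon> \<Longrightarrow>
        finite {k. 2 powr (- \<epsilon> * real j) < cmod (coefc (\<psi> i) f j k)} \<and>
        real (card {k. 2 powr (- \<epsilon> * real j) < cmod (coefc (\<psi> i) f j k)})
          \<le> M powr p * 2 powr ((?D - s * p + \<epsilon> * p) * real j)"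
    using besov_bounds[OF f p s] by metis
  define g where "g = t - (?D - s * p)"
  have g0: "0 < g" unfolding g_def using tgt by simp
  define \<epsilon> where "\<epsilon> = g / (4 * p)"
  define \<eta> where "\<eta> = min (g / (4 * t)) (1/2)"
  have e0: "0 < \<epsilon>" unfolding \<epsilon>_def using g0 p by simp
  have h0: "0 < \<eta>" unfolding \<eta>_def using g0 t0 by simp
  have h1: "\<eta> < 1" unfolding \<eta>_def by simp
  have ep: "\<epsilon> * p = g / 4" unfolding \<epsilon>_def using p by simp
  have ht: "t * \<eta> \<le> g / 4"
  proof -
    have "\<eta> \<le> g / (4 * t)" unfolding \<eta>_def by simp
    then have "t * \<eta> \<le> t * (g / (4 * t))" using t0 by (intro mult_left_mono) auto
    then show ?thesis using t0 by simp
  qed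
  define X where "X = ?D - s * p + \<epsilon> * p + t * (\<eta> - 1)"
  have X0: "X < 0" unfolding X_def g_def using ep ht g0 g_def by (simp add: algebra_simps)
  define Kb where "Kb j = M powr p * 2 powr ((?D - s * p + \<epsilon> * p) * real j)" for j
  define Bj where "Bj j = Sigma ?I (\<lambda>i. Bad \<psi> f \<epsilon> i j)" for j
  define cen :: "nat \<Rightarrow> nat \<times> (int^'d) \<Rightarrow> real^'d" where "cen j b = 2 powr (- real j) *\<^sub>R ivec (snd b)" for j b
  define r where "r j = sqrt ?D * 2 powr ((\<eta> - 1) * real j)" for j
  define K where "K j = real (card ?I) * Kb j" for j
  have finB: "finite (Bad \<psi> f \<epsilon> i j)" and cardB: "real (card (Bad \<psi> f \<epsilon> i j)) \<le> Kb j" if "i \<in> ?I" for i j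
    using Mb[OF that, of \<epsilon> j] e0 unfolding Bad_def Kb_def by auto
  show ?thesis
  proof (rule hausdorff_zero_abstract[where Bj = Bj and cen = cen and r = r and K = K])
    fix x J assume "x \<in> {x. \<not> convergent (\<lambda>j. Pop \<phi> \<psi> f j x)}"
    then obtain j where j: "j \<ge> J" "x \<in> Exc \<psi> f \<epsilon> \<eta> j"
      using E_sub_Exc[OF f p s e0 h0 dec, of x J] by auto
    then obtain i k where "i \<in> ?I" "k \<in> Bad \<psi> f \<epsilon> i j"
      "x \<in> cball (2 powr (- real j) *\<^sub>R ivec k) (sqrt ?D * 2 powr ((\<eta> - 1) * real j))"
      unfolding Exc_def by blast
    then have "(i, k) \<in> Bj j \<and> x \<in> cball (cen j (i, k)) (r j)"
      unfolding Bj_def cen_def r_def by simp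
    then show "\<exists>j\<ge>J. \<exists>b\<in>Bj j. x \<in> cball (cen j b) (r j)" using j(1) by blast
  next
    fix j show "finite (Bj j)" unfolding Bj_def using finB by (intro finite_SigmaI) auto
  next
    fix j
    have "real (card (Bj j)) = (\<Sum>i\<in>?I. real (card (Bad \<psi> f \<epsilon> i j)))"
      unfolding Bj_def using finB by (simp add: card_SigmaI)
    also have "\<dots> \<le> (\<Sum>i\<in>?I. Kb j)" using cardB by (intro sum_mono) auto
    also have "\<dots> = K j" unfolding K_def by simp
    finally show "real (card (Bj j)) \<le> K j" .
  next
    fix j show "0 \<le> r j" unfolding r_def by simp
  next
    have "(\<lambda>j. sqrt ?D * 2 powr (- (1 - \<eta>) * real j)) \<longlonglongrightarrow> sqrt ?D * 0"
      using h1 by (intro tendsto_mult tendsto_const pow_lim0) simp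
    then show "r \<longlonglongrightarrow> 0" unfolding r_def by simp
  next
    have eq: "K j * (2 * r j) powr t = (real (card ?I) * M powr p * (2 * sqrt ?D) powr t) * (2 powr X) ^ j" for j
    proof -
      have "(2 * r j) powr t = (2 * sqrt ?D) powr t * 2 powr (t * (\<eta> - 1) * real j)"
        unfolding r_def by (simp add: powr_mult powr_powr mult_ac)
      moreover have "(2 powr X) ^ j = 2 powr ((?D - s * p + \<epsilon> * p) * real j) * 2 powr (t * (\<eta> - 1) * real j)"
        unfolding X_def by (simp add: powr_realpow[symmetric] powr_powr powr_add[symmetric] algebra_simps)
      ultimately show ?thesis unfolding K_def Kb_def by (simp add: mult_ac)
    qed
    have "summable (\<lambda>j. (real (card ?I) * M powr p * (2 * sqrt ?D) powr t) * (2 powr X) ^ j)"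
      using X0 by (intro summable_mult summable_geometric) (simp add: powr_less_one)
    then show "summable (\<lambda>j. K j * (2 * r j) powr t)" unfolding eq .
  next
    show "0 < t" by (rule t0)
  qed
qed

theorem proposition3p2:
  fixes \<phi> :: "real ^ 'd \<Rightarrow> complex" and \<psi> :: "nat \<Rightarrow> real ^ 'd \<Rightarrow> complex"
    and f :: "real ^ 'd \<Rightarrow> complex" and s p :: real
  assumes mra: "orth_MRA \<phi>"
    and wav: "associated_wavelets \<phi> \<psi>"
    and smooth_phi: "smooth_decay (nat \<lfloor>s\<rfloor> + 1) \<phi>"
    and smooth_psi: "\<forall>i\<in>{1..2^CARD('d) - 1}. smooth_decay (nat \<lfloor>s\<rfloor> + 1) (\<psi> i)"
    and s: "s \<ge> 0" and p: "p \<ge> 1"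
    and f: "besov s p \<phi> \<psi> f"
  shows "hausdorff_dim {x. \<not> convergent (\<lambda>j. Pop \<phi> \<psi> f j x)}
           \<le> ereal (real CARD('d) - s * p)"
proof -
  let ?E = "{x. \<not> convergent (\<lambda>j. Pop \<phi> \<psi> f j x)}"
  have dec: "\<forall>i\<in>{1..2^CARD('d) - 1}. fast_decay (\<psi> i)"
    using smooth_psi smooth_decay_fast by blast
  show ?thesis
  proof (cases "?E = {}")
    case True
    then show ?thesis unfolding hausdorff_dim_def by simp
  next
    case False
    then have nn: "0 \<le> real CARD('d) - s * p"
      using empty_case[OF f p s dec] by linarith
    have "Inf {ereal t | t. t > 0 \<and> hausdorff_measure t ?E = 0} \<le> ereal (real CARD('d) - s * p)"
    proof (rule ereal_le_epsilon2)
      fix e :: real assume e: "0 < e"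
      define t where "t = real CARD('d) - s * p + e"
      have t0: "0 < t" unfolding t_def using nn e by simp
      have "hausdorff_measure t ?E = 0"
        using measure_zero_case[OF f p s dec t0] e unfolding t_def by simp
      then have "ereal t \<in> {ereal t | t. t > 0 \<and> hausdorff_measure t ?E = 0}" using t0 by blast
      then have "Inf {ereal t | t. t > 0 \<and> hausdorff_measure t ?E = 0} \<le> ereal t" by (rule Inf_lower)
      then show "Inf {ereal t | t. t > 0 \<and> hausdorff_measure t ?E = 0} \<le> ereal (real CARD('d) - s * p) + ereal e"
        unfolding t_def by simp
    qed
    then show ?thesis unfolding hausdorff_dim_def using False by simp
  qed
qed

end
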